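(* Let $\mathbb D=\{z\in\mathbb C:|z|\le1\}$ and let $B:\mathbb Z\times\mathbb Z\to\mathbb D$. For $n\in\mathbb Z$ and $l\in\{0,1,2,\ldots\}$ put $$s_n^B(l)=\Big(\frac{\pi}{\sqrt3}\Big)^l\Big(1-\frac{3}{\pi^2}\sum_{k\in\mathbb Z,\,k\neq n}\frac{|B(n,k)|^l}{(k-n)^2}\Big)$$ (with $|B(n,k)|^0=1$). Assume there is $l_0\in\{1,2,\ldots\}$ such that $s_n^B(l_0)=0$ for all $n\in\mathbb Z$. Then $|B(n,k)|=1$ for all $n,k\in\mathbb Z$ with $n\neq k$, and $s_n^B(l)=0$ for all $n\in\mathbb Z$ and all $l=0,1,2,\ldots$.
   Context: The sequence $(s_n^B(l))_{l}$ is called the $n$-th noise sequence of $B$. *)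

theory Defs
  imports "HOL-Analysis.Analysis"
begin

text \<open>The series is absolutely convergent
  (terms bounded by 1/(k-n)^2 when |B| \<le> 1), so the unordered sum infsum
  agrees with the paper's series. Note |B(n,k)|^0 = 1 by definition of ^.\<close>
definition noise_seq :: "(int \<Rightarrow> int \<Rightarrow> complex) \<Rightarrow> int \<Rightarrow> nat \<Rightarrow> real" where
  "noise_seq B n l = (pi / sqrt 3) ^ l *
     (1 - 3 / pi^2 * (\<Sum>\<^sub>\<infinity>k\<in>{k. k \<noteq> n}. norm (B n k) ^ l / (real_of_int (k - n))^2))"

end

theory Submission
  imports Defs
begin

lemma basel_nat: "((\<lambda>m::nat. 1 / (real m + 1)^2) has_sum pi^2/6) UNIV"
  using sums_nonneg_imp_has_sum[OF inverse_squares_sums] by (simp add: add.commute)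

lemma basel_pos: "((\<lambda>k::int. 1 / (real_of_int (k - n))^2) has_sum pi^2/6) {k. k > n}"
proof -
  have "((\<lambda>m::nat. 1 / (real m + 1)^2) has_sum pi^2/6) UNIV
        = ((\<lambda>k::int. 1 / (real_of_int (k - n))^2) has_sum pi^2/6) {k. k > n}"
    by (rule has_sum_reindex_bij_witness[where i="\<lambda>k. nat (k - n - 1)" and j="\<lambda>m. n + int m + 1"])
       auto
  with basel_nat show ?thesis by simp
qed

lemma basel_neg: "((\<lambda>k::int. 1 / (real_of_int (k - n))^2) has_sum pi^2/6) {k. k < n}"
proof -
  have "((\<lambda>m::nat. 1 / (real m + 1)^2) has_sum pi^2/6) UNIV
        = ((\<lambda>k::int. 1 / (real_of_int (k - n))^2) has_sum pi^2/6) {k. k < n}"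
    by (rule has_sum_reindex_bij_witness[where i="\<lambda>k. nat (n - k - 1)" and j="\<lambda>m. n - int m - 1"])
       (auto simp: power2_eq_square algebra_simps)
  with basel_nat show ?thesis by simp
qed

lemma basel_int: "((\<lambda>k::int. 1 / (real_of_int (k - n))^2) has_sum pi^2/3) {k. k \<noteq> n}"
proof -
  have "((\<lambda>k::int. 1 / (real_of_int (k - n))^2) has_sum (pi^2/6 + pi^2/6)) ({k. k > n} \<union> {k. k < n})"
    by (rule has_sum_Un_disjoint[OF basel_pos basel_neg]) auto
  moreover have "{k. k > n} \<union> {k. k < n} = {k. k \<noteq> n}" by auto
  ultimately show ?thesis by simp
qed

theorem proposition4p1:
  fixes B :: "int \<Rightarrow> int \<Rightarrow> complex" and l0 :: nat
  assumes disk: "\<And>n k. norm (B n k) \<le> 1"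
    and l0_pos: "l0 \<ge> 1"
    and zero: "\<And>n. noise_seq B n l0 = 0"
  shows "(\<forall>n k. n \<noteq> k \<longrightarrow> norm (B n k) = 1) \<and> (\<forall>n l. noise_seq B n l = 0)"
proof -
  have one: "norm (B n k) = 1" if "n \<noteq> k" for n k
  proof (rule ccontr)
    assume ne: "norm (B n k) \<noteq> 1"
    let ?g = "\<lambda>k::int. 1 / (real_of_int (k - n))^2"
    let ?f = "\<lambda>k::int. norm (B n k) ^ l0 / (real_of_int (k - n))^2"
    have le: "?f j \<le> ?g j" for j
      by (rule divide_right_mono) (auto intro: power_le_one disk)
    have sf: "?f summable_on {k. k \<noteq> n}"
      by (rule summable_on_comparison_test[where f="?g"]) (use basel_int[of n] le in \<open>auto simp: has_sum_imp_summable\<close>)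
    have lt1: "norm (B n k) < 1" using ne disk[of n k] by linarith
    have "norm (B n k) ^ l0 < 1"
      using lt1 l0_pos by (simp add: power_less_one_iff)
    then have "?f k < ?g k" using that
      by (intro divide_strict_right_mono) auto
    then have "infsum ?f {k. k \<noteq> n} < pi^2/3"
      by (intro has_sum_strict_mono[OF has_sum_infsum[OF sf] basel_int le, of k]) (use that in auto)
    moreover have "infsum ?f {k. k \<noteq> n} = pi^2/3"
    proof -
      have "(pi / sqrt 3) ^ l0 \<noteq> 0" by simp
      then have "1 - 3 / pi^2 * infsum ?f {k. k \<noteq> n} = 0"
        using zero[of n] unfolding noise_seq_def by (simp only: mult_eq_0_iff) blast
      then have "3 / pi^2 * infsum ?f {k. k \<noteq> n} = 1" by linarith
      moreover have "pi^2 > 0" by simp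
      ultimately show ?thesis by (simp add: field_simps)
    qed
    ultimately show False by simp
  qed
  have "noise_seq B n l = 0" for n l
  proof -
    have "(\<Sum>\<^sub>\<infinity>k\<in>{k. k \<noteq> n}. norm (B n k) ^ l / (real_of_int (k - n))^2)
        = (\<Sum>\<^sub>\<infinity>k\<in>{k. k \<noteq> n}. 1 / (real_of_int (k - n))^2)"
      by (rule infsum_cong) (use one in auto)
    also have "\<dots> = pi^2/3" using basel_int infsumI by blast
    finally show ?thesis unfolding noise_seq_def by simp
  qed
  with one show ?thesis by blast
qed

end
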